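(* Let $(Y(0),Y(1),\tilde U,X,Z)$ be random variables as described in the context, and suppose Assumption 1 holds. Then for every (measurable) encouragement rule $\boldsymbol{\alpha}:\mathcal{X}\times\mathcal{Z}\to\mathbb{R}$, \[ W(\boldsymbol{\alpha})=E[Y]+E\Big[\int_0^1 \operatorname{MTE}(u,X)\,\big(1\{p(X,\boldsymbol{\alpha}(X,Z))\geq u\}-1\{p(X,Z)\geq u\}\big)\,du\Big]. \]
   Context: Setup: $D\in\{0,1\}$ is a binary treatment; $(Y(0),Y(1))$ are real-valued potential outcomes and $Y=Y(1)D+Y(0)(1-D)$; $X\in\mathcal{X}\subset\mathbb{R}^{d_x}$ are covariates; $Z\in\mathcal{Z}\subset\mathbb{R}$ is an instrument. For each $z\in\mathbb{R}$ the potential treatment is $D(z)=1\{\tilde\nu(X,z)-\tilde U\geq 0\}$ for an unknown function $\tilde\nu$ and an unobserved scalar $\tilde U$, and the observed treatment is $D=D(Z)$. Assumption 1: (i) $\tilde U$ is independent of $Z$ conditional on $X$; (ii) $E[Y(d)\mid X,Z,\tilde U]=E[Y(d)\mid X,\tilde U]$ and $E|Y(d)|<\infty$ for $d\in\{0,1\}$; (iii) $\tilde U$ is continuously distributed conditional on $X$. Define $U=F_{\tilde U|X}(\tilde U\mid X)$ and $\nu(x,z)=F_{\tilde U|X}(\tilde\nu(x,z)\mid x)$, so that $D(z)=1\{\nu(X,z)\ge U\}$ with $U\mid X,Z\sim\mathrm{Unif}[0,1]$, and the propensity score $p(x,z)=\Pr(D=1\mid X=x,Z=z)$ equals $\nu(x,z)$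 (extended to all $z\in\mathbb{R}$ via this formula). The marginal treatment effect is $\operatorname{MTE}(u,x)=E[Y(1)-Y(0)\mid U=u,X=x]$. An encouragement rule is a map $\boldsymbol{\alpha}:\mathcal{X}\times\mathcal{Z}\to\mathbb{R}$ that sets the instrument of an individual with $(X,Z)=(x,z)$ to $\boldsymbol{\alpha}(x,z)$; its social welfare is $W(\boldsymbol{\alpha})=E[Y(D(\boldsymbol{\alpha}(X,Z)))]$ where $Y(D(a))=Y(1)D(a)+Y(0)(1-D(a))$. *)

theory Defs
  imports "HOL-Probability.Probability"
begin

definition gen_sigma :: "'a measure \<Rightarrow> ('a \<Rightarrow> 'b::topological_space) \<Rightarrow> 'a measure" where
  "gen_sigma M f = vimage_algebra (space M) f borel"

definition pot_treat :: "('x \<Rightarrow> real \<Rightarrow> real) \<Rightarrow> ('a \<Rightarrow> 'x) \<Rightarrow> ('a \<Rightarrow> real) \<Rightarrow> 'a \<Rightarrow> real \<Rightarrow> real" where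
  "pot_treat nut X Ut w a = (if nut (X w) a - Ut w \<ge> 0 then 1 else 0)"

definition outcome :: "('a \<Rightarrow> real) \<Rightarrow> ('a \<Rightarrow> real) \<Rightarrow> 'a \<Rightarrow> real \<Rightarrow> real" where
  "outcome Y0 Y1 w d = Y1 w * d + Y0 w * (1 - d)"

definition welfare ::
  "'a measure \<Rightarrow> ('a \<Rightarrow> real) \<Rightarrow> ('a \<Rightarrow> real) \<Rightarrow> ('x \<Rightarrow> real \<Rightarrow> real) \<Rightarrow> ('a \<Rightarrow> 'x) \<Rightarrow> ('a \<Rightarrow> real)
    \<Rightarrow> ('a \<Rightarrow> real) \<Rightarrow> ('x \<Rightarrow> real \<Rightarrow> real) \<Rightarrow> real" where
  "welfare M Y0 Y1 nut X Ut Z \<alpha> =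
     (\<integral>w. outcome Y0 Y1 w (pot_treat nut X Ut w (\<alpha> (X w) (Z w))) \<partial>M)"

text \<open>Propensity score p(x,z) = F_{U~|X}(nu~(x,z) | x), for all real z.\<close>
definition propensity :: "('x \<Rightarrow> real \<Rightarrow> real) \<Rightarrow> ('x \<Rightarrow> real \<Rightarrow> real) \<Rightarrow> 'x \<Rightarrow> real \<Rightarrow> real" where
  "propensity F nut x z = F x (nut x z)"

end

theory Submission
  imports Defs
begin

lemma gen_sigma_subalg:
  fixes f :: "'a \<Rightarrow> 'b::topological_space"
  assumes "f \<in> borel_measurable M"
  shows "subalgebra M (gen_sigma M f)"
  using assms unfolding subalgebra_def gen_sigma_def
  by (simp add: measurable_iff_sets space_vimage_algebra)

lemma gen_sigma_sfs:
  fixes f :: "'a \<Rightarrow> 'b::topological_space"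
  assumes "finite_measure M" "f \<in> borel_measurable M"
  shows "sigma_finite_subalgebra M (gen_sigma M f)"
  by (rule finite_measure_subalgebra_is_sigma_finite)
     (simp add: finite_measure_subalgebra_def finite_measure_subalgebra_axioms_def assms gen_sigma_subalg)

lemma gen_sigma_meas:
  fixes f :: "'a \<Rightarrow> 'b::topological_space"
  assumes "h \<in> borel_measurable (borel :: 'b measure)"
  shows "(\<lambda>w. h (f w)) \<in> borel_measurable (gen_sigma M f)"
  unfolding gen_sigma_def
  by (rule measurable_compose[OF measurable_vimage_algebra1 assms]) simp

lemma gen_sigma_meas':
  assumes "h \<in> measurable (borel :: 'b::topological_space measure) N"
  shows "(\<lambda>w. h (f w)) \<in> measurable (gen_sigma M f) N"
  unfolding gen_sigma_def
  by (rule measurable_compose[OF measurable_vimage_algebra1 assms]) simp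

lemma space_gen_sigma[simp]: "space (gen_sigma M f) = space M"
  by (simp add: gen_sigma_def space_vimage_algebra)


locale setting =
  fixes M :: "'a measure"
    and Y0 Y1 Ut Z :: "'a \<Rightarrow> real"
    and X :: "'a \<Rightarrow> 'x::euclidean_space"
    and nut :: "'x \<Rightarrow> real \<Rightarrow> real"
    and F :: "'x \<Rightarrow> real \<Rightarrow> real"
    and mte :: "real \<Rightarrow> 'x \<Rightarrow> real"
  assumes prob: "prob_space M"
    and meas_Y0[measurable]: "Y0 \<in> borel_measurable M"
    and meas_Y1[measurable]: "Y1 \<in> borel_measurable M"
    and meas_Ut[measurable]: "Ut \<in> borel_measurable M"
    and meas_Z[measurable]: "Z \<in> borel_measurable M"
    and meas_X[measurable]: "X \<in> borel_measurable M"
    and A1_i: "\<And>A B. A \<in> sets borel \<Longrightarrow> B \<in> sets borel \<Longrightarrow>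
        AE w in M. real_cond_exp M (gen_sigma M X)
                     (\<lambda>w. indicator {w. Ut w \<in> A \<and> Z w \<in> B} w) w
                   = real_cond_exp M (gen_sigma M X) (\<lambda>w. indicator {w. Ut w \<in> A} w) w
                     * real_cond_exp M (gen_sigma M X) (\<lambda>w. indicator {w. Z w \<in> B} w) w"
    and A1_ii_Y0: "AE w in M. real_cond_exp M (gen_sigma M (\<lambda>w. (X w, Z w, Ut w))) Y0 w
                             = real_cond_exp M (gen_sigma M (\<lambda>w. (X w, Ut w))) Y0 w"
    and A1_ii_Y1: "AE w in M. real_cond_exp M (gen_sigma M (\<lambda>w. (X w, Z w, Ut w))) Y1 w
                             = real_cond_exp M (gen_sigma M (\<lambda>w. (X w, Ut w))) Y1 w"
    and int_Y0: "integrable M Y0"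
    and int_Y1: "integrable M Y1"
    and F_cdf: "\<And>t. AE w in M. F (X w) t
                   = real_cond_exp M (gen_sigma M X) (\<lambda>w. indicator {w. Ut w \<le> t} w) w"
    and F_meas[measurable]: "\<And>t. (\<lambda>x. F x t) \<in> borel_measurable borel"
    and F_mono: "\<And>x. mono (F x)"
    and F_bot: "\<And>x. (F x \<longlongrightarrow> 0) at_bot"
    and F_top: "\<And>x. (F x \<longlongrightarrow> 1) at_top"
    and A1_iii: "\<And>x. continuous_on UNIV (F x)"
    and meas_mte[measurable]: "(\<lambda>(u, x). mte u x) \<in> borel_measurable borel"
    and mte_def: "AE w in M. mte (F (X w) (Ut w)) (X w)
                   = real_cond_exp M (gen_sigma M (\<lambda>w. (F (X w) (Ut w), X w)))
                       (\<lambda>w. Y1 w - Y0 w) w"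
begin

lemma F_ge0: "0 \<le> F x t"
proof (rule tendsto_le[OF _ tendsto_const F_bot])
  show "\<forall>\<^sub>F s in at_bot. F x s \<le> F x t"
    using eventually_le_at_bot[of t] by eventually_elim (use F_mono in \<open>auto simp: mono_def\<close>)
qed simp

lemma F_le1: "F x t \<le> 1"
proof (rule tendsto_le[OF _ F_top tendsto_const])
  show "\<forall>\<^sub>F s in at_top. F x t \<le> F x s"
    using eventually_ge_at_top[of t] by eventually_elim (use F_mono in \<open>auto simp: mono_def\<close>)
qed simp

lemma F_cont: "isCont (F x) t"
  using A1_iii[of x] by (simp add: continuous_on_eq_continuous_at)

lemma F_joint': "(\<lambda>p. F (fst p) (snd p)) \<in> borel_measurable (borel \<Otimes>\<^sub>M borel)"
proof (rule borel_measurable_LIMSEQ_real)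
  let ?g = "\<lambda>n (t::real). real_of_int \<lfloor>real (Suc n) * t\<rfloor> / real (Suc n)"
  show "(\<lambda>n. F (fst p) (?g n (snd p))) \<longlonglongrightarrow> F (fst p) (snd p)" for p
  proof -
    have g1: "?g n t \<le> t" for n t
      by (simp add: field_simps)
    have g2: "t - 1 / real (Suc n) \<le> ?g n t" for n t
    proof -
      have "real (Suc n) * t - 1 \<le> real_of_int \<lfloor>real (Suc n) * t\<rfloor>" by linarith
      then have "(real (Suc n) * t - 1) / real (Suc n) \<le> real_of_int \<lfloor>real (Suc n) * t\<rfloor> / real (Suc n)"
        by (intro divide_right_mono) auto
      moreover have "t - 1 / real (Suc n) = (real (Suc n) * t - 1) / real (Suc n)"
        by (simp add: field_simps)
      ultimately show ?thesis by simp
    qed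
    have g3: "(\<lambda>n. t - 1 / real (Suc n)) \<longlonglongrightarrow> t" for t
      using tendsto_diff[OF tendsto_const[of t] LIMSEQ_inverse_real_of_nat] by (simp add: inverse_eq_divide)
    have g: "(\<lambda>n. ?g n t) \<longlonglongrightarrow> t" for t
      using tendsto_sandwich[of "\<lambda>n. t - 1 / real (Suc n)" "\<lambda>n. ?g n t" sequentially "\<lambda>n. t" t] g1 g2 g3
      by simp
    show ?thesis
      by (rule isCont_tendsto_compose[OF F_cont g])
  qed
  show "(\<lambda>p. F (fst p) (?g n (snd p))) \<in> borel_measurable (borel \<Otimes>\<^sub>M borel)" for n
  proof -
    have "(\<lambda>p. (\<lambda>i. F (fst p) (real_of_int i / real (Suc n))) (\<lfloor>real (Suc n) * snd p\<rfloor>) ) \<in> borel_measurable (borel \<Otimes>\<^sub>M borel)"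
    proof (rule measurable_compose_countable[where f="\<lambda>i p. F (fst p) (real_of_int i / real (Suc n))"])
      show "(\<lambda>p. \<lfloor>real (Suc n) * snd p\<rfloor>) \<in> borel \<Otimes>\<^sub>M borel \<rightarrow>\<^sub>M count_space UNIV" by measurable
    qed measurable
    then show ?thesis by simp
  qed
qed

lemma F_joint[measurable]: "(\<lambda>(x, t). F x t) \<in> borel_measurable (borel \<Otimes>\<^sub>M borel)"
  using F_joint' by (simp add: case_prod_beta')

definition Q :: "'x \<Rightarrow> real \<Rightarrow> real" where
  "Q x v = (if 0 < v \<and> v < 1 then Inf {t. v \<le> F x t} else 0)"

lemma Q_basic:
  assumes v: "0 < v" "v < 1"
  shows "v \<le> F x (Q x v)" "Q x v \<le> t \<longleftrightarrow> v \<le> F x t"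
proof -
  define S where "S = {t. v \<le> F x t}"
  have Qd: "Q x v = Inf S" using v by (simp add: Q_def S_def)
  have "\<forall>\<^sub>F t in at_top. v < F x t"
    using order_tendstoD(1)[OF F_top v(2)] .
  then obtain t0 where "v < F x t0" using eventually_happens'[of at_top] by (metis eventually_at_top_linorder order.refl)
  then have ne: "S \<noteq> {}" unfolding S_def by (metis empty_Collect_eq less_imp_le)
  have "\<forall>\<^sub>F t in at_bot. F x t < v"
    using order_tendstoD(2)[OF F_bot v(1)] .
  then obtain b where b: "\<And>s. s \<le> b \<Longrightarrow> F x s < v" by (auto simp: eventually_at_bot_linorder)
  have bdd: "bdd_below S"
  proof (rule bdd_belowI[of _ b])
    fix t assume "t \<in> S"
    then show "b \<le> t" using b[of t] by (force simp: S_def)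
  qed
  have cl: "closed S" unfolding S_def
    by (rule closed_Collect_le) (auto intro: continuous_intros A1_iii)
  have inS: "Inf S \<in> S" by (rule closed_contains_Inf[OF ne bdd cl])
  then show "v \<le> F x (Q x v)" by (simp add: Qd S_def)
  show "Q x v \<le> t \<longleftrightarrow> v \<le> F x t"
  proof
    assume "Q x v \<le> t"
    then show "v \<le> F x t" using inS F_mono[of x] by (auto simp: Qd S_def mono_def intro: order_trans)
  next
    assume "v \<le> F x t"
    then show "Q x v \<le> t" unfolding Qd by (intro cInf_lower[OF _ bdd]) (simp add: S_def)
  qed
qed

lemma F_Q:
  assumes v: "0 < v" "v < 1"
  shows "F x (Q x v) = v"
proof (rule antisym)
  show "v \<le> F x (Q x v)" using Q_basic[OF v] by simp
  have lim: "(F x \<longlongrightarrow> F x (Q x v)) (at_left (Q x v))"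
    using F_cont[where x=x and t="Q x v"] by (simp add: isCont_def filterlim_at_split)
  have ev: "\<forall>\<^sub>F s in at_left (Q x v). F x s \<le> v"
  proof -
    have "F x s \<le> v" if "s < Q x v" for s
      using Q_basic(2)[OF v, where x=x and t=s] that by auto
    then show ?thesis by (auto simp: eventually_at_filter)
  qed
  show "F x (Q x v) \<le> v"
    by (rule tendsto_le[OF _ tendsto_const lim ev]) simp
qed

lemma Q_meas[measurable]: "(\<lambda>(x, v). Q x v) \<in> borel_measurable (borel \<Otimes>\<^sub>M borel)"
proof (subst borel_measurable_iff_le, intro allI)
  fix a :: real
  have "{w \<in> space (borel \<Otimes>\<^sub>M borel). (case w of (x, v) \<Rightarrow> Q x v) \<le> a} =
     {w \<in> space (borel \<Otimes>\<^sub>M borel). (0 < snd w \<and> snd w < 1 \<and> snd w \<le> F (fst w) a) \<or> (\<not> (0 < snd w \<and> snd w < 1) \<and> 0 \<le> a)}"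
  proof -
    have "Q x v \<le> a \<longleftrightarrow> (0 < v \<and> v < 1 \<and> v \<le> F x a) \<or> (\<not> (0 < v \<and> v < 1) \<and> 0 \<le> a)" for x v
      by (cases "0 < v \<and> v < 1") (auto simp: Q_basic(2), auto simp: Q_def)
    then show ?thesis by auto
  qed
  also have "\<dots> \<in> sets (borel \<Otimes>\<^sub>M borel)" by measurable
  finally show "{w \<in> space (borel \<Otimes>\<^sub>M borel). (case w of (x, v) \<Rightarrow> Q x v) \<le> a} \<in> sets (borel \<Otimes>\<^sub>M borel)" .
qed

interpretation Mp: prob_space M by (rule prob)

abbreviation "SX \<equiv> gen_sigma M X"
abbreviation "S3 \<equiv> gen_sigma M (\<lambda>w. (X w, Z w, Ut w))"
abbreviation "S2 \<equiv> gen_sigma M (\<lambda>w. (X w, Ut w))"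
abbreviation "SU \<equiv> gen_sigma M (\<lambda>w. (F (X w) (Ut w), X w))"

lemma borel3: "(borel :: ('x \<times> real \<times> real) measure) = borel \<Otimes>\<^sub>M (borel \<Otimes>\<^sub>M borel)"
  by (simp add: borel_prod)
lemma borel2: "(borel :: ('x \<times> real) measure) = borel \<Otimes>\<^sub>M borel"
  by (simp add: borel_prod)
lemma borel2': "(borel :: (real \<times> 'x) measure) = borel \<Otimes>\<^sub>M borel"
  by (simp add: borel_prod)

lemma sfs_SX: "sigma_finite_subalgebra M SX"
  by (rule gen_sigma_sfs) (auto simp: Mp.finite_measure_axioms)
lemma sfs_S3: "sigma_finite_subalgebra M S3"
  by (rule gen_sigma_sfs) (auto simp: Mp.finite_measure_axioms)
lemma sfs_S2: "sigma_finite_subalgebra M S2"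
  by (rule gen_sigma_sfs) (auto simp: Mp.finite_measure_axioms)
lemma sfs_SU: "sigma_finite_subalgebra M SU"
  by (rule gen_sigma_sfs) (auto simp: Mp.finite_measure_axioms)

lemma bounded_int:
  fixes f :: "'a \<Rightarrow> real"
  assumes "f \<in> borel_measurable M" "\<And>w. w \<in> space M \<Longrightarrow> \<bar>f w\<bar> \<le> B"
  shows "integrable M f"
  using assms by (intro Mp.integrable_const_bound[where B=B]) auto

lemma rect:
  assumes A1: "A1 \<in> sets borel" and B: "B \<in> sets borel"
  shows "(\<integral>w. indicator A1 (X w) * indicator B (Z w) * indicator {..t} (Ut w) \<partial>M)
       = (\<integral>w. indicator A1 (X w) * indicator B (Z w) * F (X w) t \<partial>M)"
proof -
  interpret sigma_finite_subalgebra M SX by (rule sfs_SX)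
  let ?CE = "real_cond_exp M SX"
  let ?fA = "\<lambda>w. indicator A1 (X w) :: real"
  have fA[measurable]: "?fA \<in> borel_measurable SX"
    by (rule gen_sigma_meas) (use A1 in measurable)
  have fAF[measurable]: "(\<lambda>w. ?fA w * F (X w) t) \<in> borel_measurable SX"
    by (rule gen_sigma_meas[where h="\<lambda>x. indicator A1 x * F x t"]) (use A1 in measurable)
  have ae1: "AE w in M. ?CE (\<lambda>w. indicator {w. Ut w \<le> t \<and> Z w \<in> B} w) w
      = ?CE (\<lambda>w. indicator {w. Ut w \<le> t} w) w * ?CE (\<lambda>w. indicator {w. Z w \<in> B} w) w"
    using A1_i[of "{..t}" B] B by simp
  have ae2: "AE w in M. F (X w) t = ?CE (\<lambda>w. indicator {w. Ut w \<le> t} w) w"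
    by (rule F_cdf)
  have mB[measurable]: "(\<lambda>w. indicator {w. Z w \<in> B} w :: real) \<in> borel_measurable M"
    using B by measurable
  have mtB[measurable]: "(\<lambda>w. indicator {w. Ut w \<le> t \<and> Z w \<in> B} w :: real) \<in> borel_measurable M"
    using B by measurable
  have mA[measurable]: "(\<lambda>w. indicator A1 (X w) :: real) \<in> borel_measurable M"
    using A1 by measurable
  have "(\<integral>w. indicator A1 (X w) * indicator B (Z w) * indicator {..t} (Ut w) \<partial>M)
      = (\<integral>w. ?fA w * indicator {w. Ut w \<le> t \<and> Z w \<in> B} w \<partial>M)"
    by (intro Bochner_Integration.integral_cong) (auto simp: indicator_def)
  also have "\<dots> = (\<integral>w. ?fA w * ?CE (\<lambda>w. indicator {w. Ut w \<le> t \<and> Z w \<in> B} w) w \<partial>M)"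
  proof (rule real_cond_exp_intg(2)[symmetric])
    show "integrable M (\<lambda>w. ?fA w * indicator {w. Ut w \<le> t \<and> Z w \<in> B} w)"
      by (rule bounded_int[where B=1]) (measurable, auto simp: indicator_def)
  qed measurable
  also have "\<dots> = (\<integral>w. (?fA w * F (X w) t) * ?CE (\<lambda>w. indicator {w. Z w \<in> B} w) w \<partial>M)"
    by (intro integral_cong_AE) (use ae1 ae2 in \<open>auto\<close>)
  also have "\<dots> = (\<integral>w. (?fA w * F (X w) t) * indicator {w. Z w \<in> B} w \<partial>M)"
  proof (rule real_cond_exp_intg(2))
    show "integrable M (\<lambda>w. (?fA w * F (X w) t) * indicator {w. Z w \<in> B} w)"
      by (rule bounded_int[where B=1]) (measurable, auto simp: indicator_def F_ge0 F_le1 abs_le_iff intro: order_trans[OF _ F_ge0])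
  qed measurable
  also have "\<dots> = (\<integral>w. indicator A1 (X w) * indicator B (Z w) * F (X w) t \<partial>M)"
    by (intro Bochner_Integration.integral_cong) (auto simp: indicator_def)
  finally show ?thesis .
qed

lemma nn_to_int:
  fixes f :: "'a \<Rightarrow> real"
  assumes "f \<in> borel_measurable M" "\<And>w. w \<in> space M \<Longrightarrow> 0 \<le> f w" "\<And>w. w \<in> space M \<Longrightarrow> f w \<le> B"
  shows "(\<integral>\<^sup>+ w. ennreal (f w) \<partial>M) = ennreal (\<integral> w. f w \<partial>M)"
  by (rule nn_integral_eq_integral) (use assms in \<open>auto intro!: bounded_int[where B=B]\<close>)

lemma G1:
  assumes C: "C \<in> sets (borel \<Otimes>\<^sub>M borel)"
  shows "(\<integral>\<^sup>+w. indicator {..t} (Ut w) * indicator C (X w, Z w) \<partial>M)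
       = (\<integral>\<^sup>+w. ennreal (F (X w) t) * indicator C (X w, Z w) \<partial>M)"
proof -
  define N1 where "N1 = distr (density M (\<lambda>w. indicator {..t} (Ut w))) (borel \<Otimes>\<^sub>M borel) (\<lambda>w. (X w, Z w))"
  define N2 where "N2 = distr (density M (\<lambda>w. ennreal (F (X w) t))) (borel \<Otimes>\<^sub>M borel) (\<lambda>w. (X w, Z w))"
  have e1: "emeasure N1 C = (\<integral>\<^sup>+w. indicator {..t} (Ut w) * indicator C (X w, Z w) \<partial>M)" if "C \<in> sets (borel \<Otimes>\<^sub>M borel)" for C
    unfolding N1_def using that
    by (subst emeasure_distr) (auto simp: emeasure_density intro!: nn_integral_cong split: split_indicator)
  have e2: "emeasure N2 C = (\<integral>\<^sup>+w. ennreal (F (X w) t) * indicator C (X w, Z w) \<partial>M)" if "C \<in> sets (borel \<Otimes>\<^sub>M borel)" for C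
    unfolding N2_def using that
    by (subst emeasure_distr) (auto simp: emeasure_density intro!: nn_integral_cong split: split_indicator)
  have "N1 = N2"
  proof (rule measure_eqI_generator_eq[OF Int_stable_pair_measure_generator[of borel borel], where \<Omega>=UNIV and A="\<lambda>_. UNIV"])
    show "{a \<times> b |a b. a \<in> sets borel \<and> b \<in> sets borel} \<subseteq> Pow UNIV" by auto
    show "sets N1 = sigma_sets UNIV {a \<times> b |a b. a \<in> sets (borel :: 'x measure) \<and> b \<in> sets (borel :: real measure)}"
      unfolding N1_def by (simp add: sets_pair_measure)
    show "sets N2 = sigma_sets UNIV {a \<times> b |a b. a \<in> sets (borel :: 'x measure) \<and> b \<in> sets (borel :: real measure)}"
      unfolding N2_def by (simp add: sets_pair_measure)
    show "range (\<lambda>_. UNIV) \<subseteq> {a \<times> b |a b. a \<in> sets borel \<and> b \<in> sets borel}" by (auto intro!: exI[of _ UNIV])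
    show "(\<Union>i. UNIV) = UNIV" by simp
    show "emeasure N1 UNIV \<noteq> \<infinity>" for i :: nat
    proof -
      have "UNIV \<in> sets (borel \<Otimes>\<^sub>M borel :: ('x \<times> real) measure)"
        using sets.top[of "borel \<Otimes>\<^sub>M borel :: ('x \<times> real) measure"] by (simp add: space_pair_measure)
      then have "emeasure N1 UNIV = (\<integral>\<^sup>+w. indicator {..t} (Ut w) * indicator UNIV (X w, Z w) \<partial>M)"
        by (rule e1)
      also have "\<dots> \<le> (\<integral>\<^sup>+w. 1 \<partial>M)" by (intro nn_integral_mono) (auto split: split_indicator)
      also have "\<dots> < \<infinity>" by (simp add: Mp.emeasure_space_1)
      finally show ?thesis by simp
    qed
  next
    fix S assume "S \<in> {a \<times> b |a b. a \<in> sets (borel :: 'x measure) \<and> b \<in> sets (borel :: real measure)}"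
    then obtain a b where S: "S = a \<times> b" and a: "a \<in> sets borel" and b: "b \<in> sets borel" by auto
    have Sm: "S \<in> sets (borel \<Otimes>\<^sub>M borel)" using S a b by auto
    have "emeasure N1 S = (\<integral>\<^sup>+w. ennreal (indicator a (X w) * indicator b (Z w) * indicator {..t} (Ut w)) \<partial>M)"
      using e1[OF Sm] S by (auto intro!: nn_integral_cong split: split_indicator)
    also have "\<dots> = ennreal (\<integral>w. indicator a (X w) * indicator b (Z w) * indicator {..t} (Ut w) \<partial>M)"
      by (rule nn_to_int[where B=1]) (use a b in measurable, auto split: split_indicator)
    also have "\<dots> = ennreal (\<integral>w. indicator a (X w) * indicator b (Z w) * F (X w) t \<partial>M)"
      by (simp add: rect[OF a b])
    also have "\<dots> = (\<integral>\<^sup>+w. ennreal (indicator a (X w) * indicator b (Z w) * F (X w) t) \<partial>M)"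
      by (rule nn_to_int[where B=1, symmetric]) (use a b in measurable, auto split: split_indicator simp: F_ge0 F_le1)
    also have "\<dots> = emeasure N2 S"
      using e2[OF Sm] S by (auto intro!: nn_integral_cong split: split_indicator)
    finally show "emeasure N1 S = emeasure N2 S" .
  qed
  then show ?thesis using e1[OF C] e2[OF C] by simp
qed

definition PXZ :: "('x \<times> real) measure" where
  "PXZ = distr M (borel \<Otimes>\<^sub>M borel) (\<lambda>w. (X w, Z w))"
definition U01 :: "real measure" where
  "U01 = density lborel (indicator {0<..<1})"
definition L :: "(('x \<times> real) \<times> real) measure" where
  "L = distr M ((borel \<Otimes>\<^sub>M borel) \<Otimes>\<^sub>M borel) (\<lambda>w. ((X w, Z w), Ut w))"
definition R :: "(('x \<times> real) \<times> real) measure" where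
  "R = distr (PXZ \<Otimes>\<^sub>M U01) ((borel \<Otimes>\<^sub>M borel) \<Otimes>\<^sub>M borel) (\<lambda>y. (fst y, Q (fst (fst y)) (snd y)))"

lemma sets_PXZ[measurable_cong]: "sets PXZ = sets (borel \<Otimes>\<^sub>M borel)"
  by (simp add: PXZ_def)
lemma sets_U01[measurable_cong]: "sets U01 = sets borel"
  by (simp add: U01_def)
lemma space_PXZ[simp]: "space PXZ = UNIV"
  by (simp add: PXZ_def space_pair_measure)
lemma space_U01[simp]: "space U01 = UNIV"
  by (simp add: U01_def)

lemma emeasure_U01: "S \<in> sets borel \<Longrightarrow> emeasure U01 S = emeasure lborel ({0<..<1} \<inter> S)"
  unfolding U01_def
  by (subst emeasure_density) (auto simp flip: nn_integral_indicator intro!: nn_integral_cong split: split_indicator)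

lemma prob_U01: "prob_space U01"
proof (rule prob_spaceI)
  show "emeasure U01 (space U01) = 1"
    by (simp add: emeasure_U01)
qed

lemma prob_PXZ: "prob_space PXZ"
  unfolding PXZ_def by (rule Mp.prob_space_distr) measurable

interpretation U: prob_space U01 by (rule prob_U01)
interpretation PX: prob_space PXZ by (rule prob_PXZ)
interpretation PU: pair_sigma_finite PXZ U01 ..

lemma emeasure_U01_Q: "emeasure U01 {v. Q x v \<le> t} = ennreal (F x t)"
proof -
  have "{v. Q x v \<le> t} \<in> sets borel"
  proof -
    have "(\<lambda>v. Q x v) \<in> borel_measurable borel" by measurable
    then show ?thesis by measurable
  qed
  then have "emeasure U01 {v. Q x v \<le> t} = emeasure lborel ({0<..<1} \<inter> {v. Q x v \<le> t})"
    by (rule emeasure_U01)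
  also have "{0<..<1} \<inter> {v. Q x v \<le> t} = {0<..<1} \<inter> {..F x t}"
    using Q_basic(2) by auto
  also have "emeasure lborel \<dots> = ennreal (F x t)"
  proof (cases "F x t < 1")
    case True
    then have "{0<..<1} \<inter> {..F x t} = {0<..F x t}" by auto
    then show ?thesis using F_ge0[of x t] by simp
  next
    case False
    then have "F x t = 1" using F_le1[of x t] by simp
    moreover have "{0<..<1} \<inter> {..1::real} = {0<..<1}" by auto
    ultimately show ?thesis by simp
  qed
  finally show ?thesis .
qed

lemma sets_gen3: "sets ((borel \<Otimes>\<^sub>M borel) \<Otimes>\<^sub>M borel :: (('x \<times> real) \<times> real) measure)
   = sigma_sets UNIV {a \<times> b |a b. a \<in> sets (borel \<Otimes>\<^sub>M borel :: ('x \<times> real) measure) \<and> b \<in> range atMost}"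
proof -
  let ?A = "borel \<Otimes>\<^sub>M borel :: ('x \<times> real) measure"
  have spA: "space ?A = UNIV" by (simp add: space_pair_measure)
  have sb: "sets (borel :: real measure) = sigma_sets UNIV (range atMost)"
    by (subst borel_eq_atMost) (simp add: sets_measure_of)
  have "sets (?A \<Otimes>\<^sub>M borel) = sets (sigma (space ?A \<times> space (borel :: real measure))
         {a \<times> b |a b. a \<in> sets ?A \<and> b \<in> range atMost})"
  proof (rule sets_pair_eq[where Ca="{UNIV}" and Cb="range (\<lambda>n::nat. {..real n})"])
    show "sets ?A \<subseteq> Pow (space ?A)" by (rule sets.space_closed)
    show "sets ?A = sigma_sets (space ?A) (sets ?A)" by (simp add: sets.sigma_sets_eq)
    show "{UNIV} \<subseteq> sets ?A" using sets.top[of ?A] spA by simp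
    show "\<Union>{UNIV} = space ?A" using spA by simp
    show "range atMost \<subseteq> Pow (space (borel :: real measure))" by auto
    show "sets (borel :: real measure) = sigma_sets (space borel) (range atMost)" using sb by simp
    show "range (\<lambda>n::nat. {..real n}) \<subseteq> range atMost" by auto
    show "\<Union>(range (\<lambda>n::nat. {..real n})) = space borel"
      by (auto simp: real_arch_simple)
  qed auto
  also have "\<dots> = sigma_sets UNIV {a \<times> b |a b. a \<in> sets ?A \<and> b \<in> range atMost}"
    using spA by (subst sets_measure_of) auto
  finally show ?thesis .
qed

lemma L_eq_R: "L = R"
proof (rule measure_eqI_generator_eq[where \<Omega>=UNIV
      and E="{a \<times> b |a b. a \<in> sets (borel \<Otimes>\<^sub>M borel :: ('x \<times> real) measure) \<and> b \<in> range atMost}"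
      and A="\<lambda>n. UNIV \<times> {..real n}"])
  let ?E = "{a \<times> b |a b. a \<in> sets (borel \<Otimes>\<^sub>M borel :: ('x \<times> real) measure) \<and> b \<in> range (atMost :: real \<Rightarrow> _)}"
  have UNIV2: "UNIV \<in> sets (borel \<Otimes>\<^sub>M borel :: ('x \<times> real) measure)"
    using sets.top[of "borel \<Otimes>\<^sub>M borel :: ('x \<times> real) measure"] by (simp add: space_pair_measure)
  show "Int_stable ?E"
  proof (rule Int_stableI)
    fix a b assume "a \<in> ?E" "b \<in> ?E"
    then obtain a1 t1 b1 t2 where "a = a1 \<times> {..t1}" "b = b1 \<times> {..t2}"
      "a1 \<in> sets (borel \<Otimes>\<^sub>M borel)" "b1 \<in> sets (borel \<Otimes>\<^sub>M borel)" by auto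
    moreover have "(a1 \<times> {..t1}) \<inter> (b1 \<times> {..t2}) = (a1 \<inter> b1) \<times> {..min t1 t2}" by auto
    ultimately show "a \<inter> b \<in> ?E" by auto
  qed
  show "?E \<subseteq> Pow UNIV" by auto
  show "sets L = sigma_sets UNIV ?E" unfolding L_def using sets_gen3 by simp
  show "sets R = sigma_sets UNIV ?E" unfolding R_def using sets_gen3 by simp
  show "range (\<lambda>n. UNIV \<times> {..real n}) \<subseteq> ?E" using UNIV2 by auto
  show "(\<Union>n. UNIV \<times> {..real n}) = UNIV" by (auto simp: real_arch_simple)
  show "emeasure L (UNIV \<times> {..real n}) \<noteq> \<infinity>" for n
  proof -
    have "prob_space L" unfolding L_def by (rule Mp.prob_space_distr) measurable
    then interpret LL: prob_space L .
    show ?thesis using LL.emeasure_finite by (simp add: top_ennreal_def)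
  qed
next
  fix S assume "S \<in> {a \<times> b |a b. a \<in> sets (borel \<Otimes>\<^sub>M borel :: ('x \<times> real) measure) \<and> b \<in> range (atMost :: real \<Rightarrow> real set)}"
  then obtain C t where S: "S = C \<times> {..t}" and C[measurable]: "C \<in> sets (borel \<Otimes>\<^sub>M borel)" by auto
  have Sm: "S \<in> sets ((borel \<Otimes>\<^sub>M borel) \<Otimes>\<^sub>M borel)" using S C by auto
  have "emeasure L S = (\<integral>\<^sup>+w. indicator {..t} (Ut w) * indicator C (X w, Z w) \<partial>M)"
    unfolding L_def using Sm S
    by (subst emeasure_distr) (auto simp flip: nn_integral_indicator intro!: nn_integral_cong split: split_indicator)
  also have "\<dots> = (\<integral>\<^sup>+w. ennreal (F (X w) t) * indicator C (X w, Z w) \<partial>M)"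
    by (rule G1[OF C])
  also have "\<dots> = (\<integral>\<^sup>+p. ennreal (F (fst p) t) * indicator C p \<partial>PXZ)"
    unfolding PXZ_def by (subst nn_integral_distr) auto
  also have "\<dots> = (\<integral>\<^sup>+p. emeasure U01 (Pair p -` ((\<lambda>y. (fst y, Q (fst (fst y)) (snd y))) -` S \<inter> space (PXZ \<Otimes>\<^sub>M U01))) \<partial>PXZ)"
  proof (intro nn_integral_cong)
    fix p :: "'x \<times> real"
    have "Pair p -` ((\<lambda>y. (fst y, Q (fst (fst y)) (snd y))) -` S \<inter> space (PXZ \<Otimes>\<^sub>M U01))
        = (if p \<in> C then {v. Q (fst p) v \<le> t} else {})"
      by (auto simp: S space_pair_measure)
    then show "ennreal (F (fst p) t) * indicator C p = emeasure U01 (Pair p -` ((\<lambda>y. (fst y, Q (fst (fst y)) (snd y))) -` S \<inter> space (PXZ \<Otimes>\<^sub>M U01)))"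
      by (simp add: emeasure_U01_Q)
  qed
  also have "\<dots> = emeasure (PXZ \<Otimes>\<^sub>M U01) ((\<lambda>y. (fst y, Q (fst (fst y)) (snd y))) -` S \<inter> space (PXZ \<Otimes>\<^sub>M U01))"
  proof (rule U.emeasure_pair_measure_alt[symmetric])
    have "(\<lambda>y. (fst y, Q (fst (fst y)) (snd y))) \<in> measurable (PXZ \<Otimes>\<^sub>M U01) ((borel \<Otimes>\<^sub>M borel) \<Otimes>\<^sub>M borel)"
      by measurable
    then show "(\<lambda>y. (fst y, Q (fst (fst y)) (snd y))) -` S \<inter> space (PXZ \<Otimes>\<^sub>M U01) \<in> sets (PXZ \<Otimes>\<^sub>M U01)"
      using Sm by (rule measurable_sets)
  qed
  also have "\<dots> = emeasure R S"
    unfolding R_def using Sm by (subst emeasure_distr) auto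
  finally show "emeasure L S = emeasure R S" .
qed

lemma AE_U01: "AE v in U01. 0 < v \<and> v < 1"
  unfolding U01_def by (subst AE_density) (auto split: split_indicator)

lemma transfer_AE:
  assumes P: "{y \<in> space ((borel \<Otimes>\<^sub>M borel) \<Otimes>\<^sub>M borel). P y} \<in> sets ((borel \<Otimes>\<^sub>M borel) \<Otimes>\<^sub>M borel :: (('x \<times> real) \<times> real) measure)"
    and H: "\<And>p v. 0 < v \<Longrightarrow> v < 1 \<Longrightarrow> P (p, Q (fst p) v)"
  shows "AE w in M. P ((X w, Z w), Ut w)"
proof -
  have g[measurable]: "(\<lambda>y. (fst y, Q (fst (fst y)) (snd y))) \<in> measurable (PXZ \<Otimes>\<^sub>M U01) ((borel \<Otimes>\<^sub>M borel) \<Otimes>\<^sub>M borel)"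
    by measurable
  have Pm: "{y \<in> space (PXZ \<Otimes>\<^sub>M U01). P (fst y, Q (fst (fst y)) (snd y))} \<in> sets (PXZ \<Otimes>\<^sub>M U01)"
  proof -
    have "{y \<in> space (PXZ \<Otimes>\<^sub>M U01). P (fst y, Q (fst (fst y)) (snd y))}
       = (\<lambda>y. (fst y, Q (fst (fst y)) (snd y))) -` {y \<in> space ((borel \<Otimes>\<^sub>M borel) \<Otimes>\<^sub>M borel). P y} \<inter> space (PXZ \<Otimes>\<^sub>M U01)"
      by (auto simp: space_pair_measure)
    also have "\<dots> \<in> sets (PXZ \<Otimes>\<^sub>M U01)" by (rule measurable_sets[OF g P])
    finally show ?thesis .
  qed
  have "AE y in PXZ \<Otimes>\<^sub>M U01. P (fst y, Q (fst (fst y)) (snd y))"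
  proof (rule PU.AE_pair_measure[OF Pm])
    show "AE p in PXZ. AE v in U01. P (fst (p, v), Q (fst (fst (p, v))) (snd (p, v)))"
    proof (rule AE_I2)
      show "AE v in U01. P (fst (p, v), Q (fst (fst (p, v))) (snd (p, v)))" for p
        using AE_U01 by (rule eventually_mono) (simp add: H)
    qed
  qed
  then have "AE y in R. P y" unfolding R_def by (subst AE_distr_iff[OF g P])
  then have "AE y in L. P y" unfolding L_eq_R .
  then show ?thesis unfolding L_def by (subst (asm) AE_distr_iff) (use P in auto)
qed

lemma transfer_int:
  assumes h[measurable]: "h \<in> borel_measurable ((borel \<Otimes>\<^sub>M borel) \<Otimes>\<^sub>M borel :: (('x \<times> real) \<times> real) measure)"
  shows "(\<integral>w. h ((X w, Z w), Ut w) \<partial>M) = (\<integral>y. (h (fst y, Q (fst (fst y)) (snd y)) :: real) \<partial>(PXZ \<Otimes>\<^sub>M U01))"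
    and "integrable M (\<lambda>w. h ((X w, Z w), Ut w)) \<longleftrightarrow> integrable (PXZ \<Otimes>\<^sub>M U01) (\<lambda>y. h (fst y, Q (fst (fst y)) (snd y)))"
proof -
  have g[measurable]: "(\<lambda>y. (fst y, Q (fst (fst y)) (snd y))) \<in> measurable (PXZ \<Otimes>\<^sub>M U01) ((borel \<Otimes>\<^sub>M borel) \<Otimes>\<^sub>M borel)"
    by measurable
  have "(\<integral>w. h ((X w, Z w), Ut w) \<partial>M) = integral\<^sup>L L h"
    unfolding L_def by (subst integral_distr) auto
  also have "\<dots> = integral\<^sup>L R h" by (simp add: L_eq_R)
  also have "\<dots> = (\<integral>y. h (fst y, Q (fst (fst y)) (snd y)) \<partial>(PXZ \<Otimes>\<^sub>M U01))"
    unfolding R_def by (subst integral_distr) auto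
  finally show "(\<integral>w. h ((X w, Z w), Ut w) \<partial>M) = (\<integral>y. (h (fst y, Q (fst (fst y)) (snd y)) :: real) \<partial>(PXZ \<Otimes>\<^sub>M U01))" .
  have "integrable M (\<lambda>w. h ((X w, Z w), Ut w)) \<longleftrightarrow> integrable L h"
    unfolding L_def by (subst integrable_distr_eq) auto
  also have "\<dots> \<longleftrightarrow> integrable R h" by (simp add: L_eq_R)
  also have "\<dots> \<longleftrightarrow> integrable (PXZ \<Otimes>\<^sub>M U01) (\<lambda>y. h (fst y, Q (fst (fst y)) (snd y)))"
    unfolding R_def by (subst integrable_distr_eq) auto
  finally show "integrable M (\<lambda>w. h ((X w, Z w), Ut w)) \<longleftrightarrow> integrable (PXZ \<Otimes>\<^sub>M U01) (\<lambda>y. h (fst y, Q (fst (fst y)) (snd y)))" .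
qed

lemma D2: "AE w in M. Ut w = Q (X w) (F (X w) (Ut w))"
proof -
  have "AE w in M. (\<lambda>y. snd y = Q (fst (fst y)) (F (fst (fst y)) (snd y))) ((X w, Z w), Ut w)"
  proof (rule transfer_AE)
    show "{y \<in> space ((borel \<Otimes>\<^sub>M borel) \<Otimes>\<^sub>M borel). snd y = Q (fst (fst y)) (F (fst (fst y)) (snd y))}
        \<in> sets ((borel \<Otimes>\<^sub>M borel) \<Otimes>\<^sub>M borel :: (('x \<times> real) \<times> real) measure)"
      by measurable
    show "snd (p, Q (fst p) v) = Q (fst (fst (p, Q (fst p) v))) (F (fst (fst (p, Q (fst p) v))) (snd (p, Q (fst p) v)))"
      if "0 < v" "v < 1" for p :: "'x \<times> real" and v
      using F_Q[OF that] by simp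
  qed
  then show ?thesis by simp
qed

lemma D1:
  assumes s[measurable]: "(\<lambda>(x, z). s x z) \<in> borel_measurable (borel \<Otimes>\<^sub>M borel)"
  shows "AE w in M. (Ut w \<le> s (X w) (Z w)) \<longleftrightarrow> (F (X w) (Ut w) \<le> F (X w) (s (X w) (Z w)))"
proof -
  have "AE w in M. (\<lambda>y. (snd y \<le> s (fst (fst y)) (snd (fst y))) \<longleftrightarrow> (F (fst (fst y)) (snd y) \<le> F (fst (fst y)) (s (fst (fst y)) (snd (fst y))))) ((X w, Z w), Ut w)"
  proof (rule transfer_AE)
    show "{y \<in> space ((borel \<Otimes>\<^sub>M borel) \<Otimes>\<^sub>M borel). (snd y \<le> s (fst (fst y)) (snd (fst y))) \<longleftrightarrow> (F (fst (fst y)) (snd y) \<le> F (fst (fst y)) (s (fst (fst y)) (snd (fst y))))}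
        \<in> sets ((borel \<Otimes>\<^sub>M borel) \<Otimes>\<^sub>M borel :: (('x \<times> real) \<times> real) measure)"
      by measurable
    fix p :: "'x \<times> real" and v :: real assume v: "0 < v" "v < 1"
    show "(snd (p, Q (fst p) v) \<le> s (fst (fst (p, Q (fst p) v))) (snd (fst (p, Q (fst p) v)))) \<longleftrightarrow>
          (F (fst (fst (p, Q (fst p) v))) (snd (p, Q (fst p) v)) \<le> F (fst (fst (p, Q (fst p) v))) (s (fst (fst (p, Q (fst p) v))) (snd (fst (p, Q (fst p) v)))))"
      using F_Q[OF v] Q_basic(2)[OF v] by simp
  qed
  then show ?thesis by simp
qed

lemma CE2_CEU: "AE w in M. real_cond_exp M S2 (\<lambda>w. Y1 w - Y0 w) w = real_cond_exp M SU (\<lambda>w. Y1 w - Y0 w) w"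
proof -
  interpret S2: sigma_finite_subalgebra M S2 by (rule sfs_S2)
  interpret SU: sigma_finite_subalgebra M SU by (rule sfs_SU)
  let ?D = "\<lambda>w. Y1 w - Y0 w"
  have intD: "integrable M ?D" using int_Y0 int_Y1 by simp
  have fU: "(\<lambda>w. (F (X w) (Ut w), X w)) \<in> measurable S2 borel"
  proof -
    have "(\<lambda>p. (F (fst p) (snd p), fst p)) \<in> measurable (borel :: ('x \<times> real) measure) (borel :: (real \<times> 'x) measure)"
      unfolding borel2 borel2' by measurable
    from gen_sigma_meas'[OF this, where M=M and f="\<lambda>w. (X w, Ut w)"] show ?thesis by simp
  qed
  have sub: "subalgebra S2 SU"
    unfolding subalgebra_def using fU
    by (simp add: measurable_iff_sets gen_sigma_def space_vimage_algebra)
  have fQ: "(\<lambda>w. (X w, Q (X w) (F (X w) (Ut w)))) \<in> measurable SU borel"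
  proof -
    have "(\<lambda>p. (snd p, Q (snd p) (fst p))) \<in> measurable (borel :: (real \<times> 'x) measure) (borel :: ('x \<times> real) measure)"
      unfolding borel2 borel2' by measurable
    from gen_sigma_meas'[OF this, where M=M and f="\<lambda>w. (F (X w) (Ut w), X w)"] show ?thesis by simp
  qed
  show ?thesis
  proof (rule S2.real_cond_exp_charact)
    show "integrable M ?D" by (rule intD)
    show "integrable M (real_cond_exp M SU ?D)" by (rule SU.real_cond_exp_int(1)[OF intD])
    show "real_cond_exp M SU ?D \<in> borel_measurable S2"
      by (rule measurable_from_subalg[OF sub borel_measurable_cond_exp])
  next
    fix A assume A: "A \<in> sets S2"
    have "sets S2 = {(\<lambda>w. (X w, Ut w)) -` B \<inter> space M | B. B \<in> sets borel}"
      unfolding gen_sigma_def by (rule sets_vimage_algebra2) simp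
    with A obtain B where B: "B \<in> sets borel" and AB: "A = (\<lambda>w. (X w, Ut w)) -` B \<inter> space M" by auto
    define A' where "A' = (\<lambda>w. (X w, Q (X w) (F (X w) (Ut w)))) -` B \<inter> space M"
    have A'SU: "A' \<in> sets SU" unfolding A'_def using measurable_sets[OF fQ B] by simp
    have AM: "A \<in> sets M" using A S2.subalg by (auto simp: subalgebra_def)
    have A'M: "A' \<in> sets M" using A'SU SU.subalg by (auto simp: subalgebra_def)
    have ae: "AE w in M. w \<in> A \<longleftrightarrow> w \<in> A'"
      using D2 by eventually_elim (auto simp: AB A'_def)
    have "(\<integral>w\<in>A. ?D w \<partial>M) = (\<integral>w\<in>A'. ?D w \<partial>M)"
      by (rule set_integral_cong_set) (use AM A'M ae in \<open>auto simp: set_borel_measurable_def\<close>)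
    also have "\<dots> = (\<integral>w\<in>A'. real_cond_exp M SU ?D w \<partial>M)"
      by (rule SU.real_cond_exp_intA[OF intD A'SU])
    also have "\<dots> = (\<integral>w\<in>A. real_cond_exp M SU ?D w \<partial>M)"
      by (rule set_integral_cong_set) (use AM A'M ae in \<open>auto simp: set_borel_measurable_def\<close>)
    finally show "(\<integral>w\<in>A. ?D w \<partial>M) = (\<integral>w\<in>A. real_cond_exp M SU ?D w \<partial>M)" .
  qed
qed

lemma meas_mte'[measurable]: "(\<lambda>(u, x). mte u x) \<in> borel_measurable (borel \<Otimes>\<^sub>M borel)"
  using meas_mte by (simp add: borel_prod)

lemma AE_pair01: "AE y in PXZ \<Otimes>\<^sub>M U01. 0 < snd y \<and> snd y < 1"
proof (rule PU.AE_pair_measure)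
  show "{x \<in> space (PXZ \<Otimes>\<^sub>M U01). 0 < snd x \<and> snd x < 1} \<in> sets (PXZ \<Otimes>\<^sub>M U01)" by measurable
  show "AE x in PXZ. AE y in U01. 0 < snd (x, y) \<and> snd (x, y) < 1"
    using AE_U01 by simp
qed

lemma key:
  assumes s[measurable]: "(\<lambda>(x, z). s x z) \<in> borel_measurable (borel \<Otimes>\<^sub>M borel)"
  shows "integrable (PXZ \<Otimes>\<^sub>M U01) (\<lambda>y. mte (snd y) (fst (fst y)) *
            indicator {u. F (fst (fst y)) (s (fst (fst y)) (snd (fst y))) \<ge> u} (snd y))"
    and "(\<integral>w. (Y1 w - Y0 w) * (if s (X w) (Z w) - Ut w \<ge> 0 then 1 else 0) \<partial>M)
       = (\<integral>y. mte (snd y) (fst (fst y)) *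
            indicator {u. F (fst (fst y)) (s (fst (fst y)) (snd (fst y))) \<ge> u} (snd y) \<partial>(PXZ \<Otimes>\<^sub>M U01))"
proof -
  interpret S3: sigma_finite_subalgebra M S3 by (rule sfs_S3)
  interpret S2: sigma_finite_subalgebra M S2 by (rule sfs_S2)
  interpret SU: sigma_finite_subalgebra M SU by (rule sfs_SU)
  let ?D = "\<lambda>w. Y1 w - Y0 w"
  have intD: "integrable M ?D" using int_Y0 int_Y1 by simp
  let ?g = "\<lambda>w. if F (X w) (Ut w) \<le> F (X w) (s (X w) (Z w)) then 1 else (0::real)"
  let ?K = "\<lambda>y. mte (snd y) (fst (fst y)) * indicator {u. F (fst (fst y)) (s (fst (fst y)) (snd (fst y))) \<ge> u} (snd y)"
  let ?H = "\<lambda>y. (if F (fst (fst y)) (snd y) \<le> F (fst (fst y)) (s (fst (fst y)) (snd (fst y))) then 1 else 0) *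
                mte (F (fst (fst y)) (snd y)) (fst (fst y))"
  have aeK: "AE y in PXZ \<Otimes>\<^sub>M U01. ?H (fst y, Q (fst (fst y)) (snd y)) = ?K y"
    using AE_pair01 by eventually_elim (auto simp: F_Q split: split_indicator)
  have gS3: "?g \<in> borel_measurable S3"
  proof -
    have "(\<lambda>t. if F (fst t) (snd (snd t)) \<le> F (fst t) (s (fst t) (fst (snd t))) then 1 else (0::real))
        \<in> borel_measurable (borel :: ('x \<times> real \<times> real) measure)"
      unfolding borel3 by measurable
    from gen_sigma_meas[OF this, where M=M and f="\<lambda>w. (X w, Z w, Ut w)"] show ?thesis by simp
  qed
  have intgD: "integrable M (\<lambda>w. ?g w * ?D w)"
    by (rule Bochner_Integration.integrable_bound[OF intD]) auto
  have ae3: "AE w in M. real_cond_exp M S3 ?D w = real_cond_exp M SU ?D w"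
  proof -
    have "AE w in M. real_cond_exp M S3 ?D w = real_cond_exp M S3 Y1 w - real_cond_exp M S3 Y0 w"
      by (rule S3.real_cond_exp_diff[OF int_Y1 int_Y0])
    moreover have "AE w in M. real_cond_exp M S2 ?D w = real_cond_exp M S2 Y1 w - real_cond_exp M S2 Y0 w"
      by (rule S2.real_cond_exp_diff[OF int_Y1 int_Y0])
    ultimately show ?thesis using A1_ii_Y0 A1_ii_Y1 CE2_CEU by eventually_elim simp
  qed
  have aeD1: "AE w in M. (Ut w \<le> s (X w) (Z w)) \<longleftrightarrow> (F (X w) (Ut w) \<le> F (X w) (s (X w) (Z w)))"
    by (rule D1[OF s])
  have "(\<integral>w. ?D w * (if s (X w) (Z w) - Ut w \<ge> 0 then 1 else 0) \<partial>M) = (\<integral>w. ?g w * ?D w \<partial>M)"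
    by (rule integral_cong_AE) (use aeD1 in \<open>auto elim!: eventually_mono\<close>)
  also have "\<dots> = (\<integral>w. ?g w * real_cond_exp M S3 ?D w \<partial>M)"
    by (rule S3.real_cond_exp_intg(2)[symmetric, OF intgD gS3]) simp
  also have "\<dots> = (\<integral>w. ?g w * mte (F (X w) (Ut w)) (X w) \<partial>M)"
  proof -
    have ae: "AE w in M. ?g w * real_cond_exp M S3 ?D w = ?g w * mte (F (X w) (Ut w)) (X w)"
      using ae3 mte_def by eventually_elim simp
    show ?thesis by (rule integral_cong_AE[OF _ _ ae]) measurable
  qed
  also have "\<dots> = (\<integral>w. ?H ((X w, Z w), Ut w) \<partial>M)" by simp
  also have "\<dots> = (\<integral>y. ?H (fst y, Q (fst (fst y)) (snd y)) \<partial>(PXZ \<Otimes>\<^sub>M U01))"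
    by (rule transfer_int(1)) measurable
  also have "\<dots> = (\<integral>y. ?K y \<partial>(PXZ \<Otimes>\<^sub>M U01))"
    by (rule integral_cong_AE[OF _ _ aeK]) measurable
  finally show "(\<integral>w. ?D w * (if s (X w) (Z w) - Ut w \<ge> 0 then 1 else 0) \<partial>M) = (\<integral>y. ?K y \<partial>(PXZ \<Otimes>\<^sub>M U01))" .
  have "integrable M (\<lambda>w. ?H ((X w, Z w), Ut w))"
  proof (rule Bochner_Integration.integrable_bound[OF SU.real_cond_exp_int(1)[OF intD]])
    show "AE w in M. norm (?H ((X w, Z w), Ut w)) \<le> norm (real_cond_exp M SU ?D w)"
      using mte_def by eventually_elim auto
  qed measurable
  then have "integrable (PXZ \<Otimes>\<^sub>M U01) (\<lambda>y. ?H (fst y, Q (fst (fst y)) (snd y)))"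
    by (subst (asm) transfer_int(2)) measurable
  then show "integrable (PXZ \<Otimes>\<^sub>M U01) ?K"
    by (rule integrable_cong_AE_imp[OF _ _ aeK]) measurable
qed

lemma U01_integral:
  fixes \<phi> :: "real \<Rightarrow> real"
  assumes [measurable]: "\<phi> \<in> borel_measurable borel"
  shows "(\<integral>v. \<phi> v \<partial>U01) = (\<integral>v\<in>{0..1}. \<phi> v \<partial>lborel)"
proof -
  have eqU: "U01 = density lborel (\<lambda>x. ennreal (indicator {0<..<1} x))"
    by (simp add: U01_def ennreal_indicator)
  have "(\<integral>v. \<phi> v \<partial>U01) = (\<integral>v. indicator {0<..<1} v *\<^sub>R \<phi> v \<partial>lborel)"
    unfolding eqU by (rule integral_density) auto
  also have "\<dots> = (\<integral>v. indicator {0..1} v *\<^sub>R \<phi> v \<partial>lborel)"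
  proof (rule integral_cong_AE)
    show "AE v in lborel. indicator {0<..<1} v *\<^sub>R \<phi> v = indicator {0..1} v *\<^sub>R \<phi> v"
      using AE_lborel_singleton[of 0] AE_lborel_singleton[of 1]
      by eventually_elim (auto split: split_indicator)
  qed measurable
  finally show ?thesis by (simp add: set_lebesgue_integral_def)
qed

lemma main:
  fixes \<alpha> :: "'x \<Rightarrow> real \<Rightarrow> real"
  assumes meas_nut: "(\<lambda>(x, z). nut x z) \<in> borel_measurable borel"
    and meas_\<alpha>: "(\<lambda>(x, z). \<alpha> x z) \<in> borel_measurable borel"
  shows "welfare M Y0 Y1 nut X Ut Z \<alpha>
       = (\<integral>w. outcome Y0 Y1 w (pot_treat nut X Ut w (Z w)) \<partial>M)
         + (\<integral>w. (\<integral>u\<in>{0..1}. mte u (X w) *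
               (indicator {u. propensity F nut (X w) (\<alpha> (X w) (Z w)) \<ge> u} u
                - indicator {u. propensity F nut (X w) (Z w) \<ge> u} u) \<partial>lborel) \<partial>M)"
proof -
  have nut'[measurable]: "(\<lambda>(x, z). nut x z) \<in> borel_measurable (borel \<Otimes>\<^sub>M borel)"
    using meas_nut by (simp add: borel_prod)
  have a'[measurable]: "(\<lambda>(x, z). \<alpha> x z) \<in> borel_measurable (borel \<Otimes>\<^sub>M borel)"
    using meas_\<alpha> by (simp add: borel_prod)
  have sA[measurable]: "(\<lambda>(x, z). nut x (\<alpha> x z)) \<in> borel_measurable (borel \<Otimes>\<^sub>M borel)"
    by measurable
  let ?D = "\<lambda>w. Y1 w - Y0 w"
  have intD: "integrable M ?D" using int_Y0 int_Y1 by simp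
  let ?dA = "\<lambda>w. if nut (X w) (\<alpha> (X w) (Z w)) - Ut w \<ge> 0 then 1 else (0::real)"
  let ?dZ = "\<lambda>w. if nut (X w) (Z w) - Ut w \<ge> 0 then 1 else (0::real)"
  let ?KA = "\<lambda>y. mte (snd y) (fst (fst y)) * indicator {u. F (fst (fst y)) (nut (fst (fst y)) (\<alpha> (fst (fst y)) (snd (fst y)))) \<ge> u} (snd y)"
  let ?KZ = "\<lambda>y. mte (snd y) (fst (fst y)) * indicator {u. F (fst (fst y)) (nut (fst (fst y)) (snd (fst y))) \<ge> u} (snd y)"
  note kA = key[OF sA]
  note kZ = key[OF nut']
  let ?IA = "\<lambda>p. \<integral>v. ?KA (p, v) \<partial>U01"
  let ?IZ = "\<lambda>p. \<integral>v. ?KZ (p, v) \<partial>U01"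
  have intDA: "integrable M (\<lambda>w. ?D w * ?dA w)"
    by (rule Bochner_Integration.integrable_bound[OF intD]) auto
  have intDZ: "integrable M (\<lambda>w. ?D w * ?dZ w)"
    by (rule Bochner_Integration.integrable_bound[OF intD]) auto
  have W: "welfare M Y0 Y1 nut X Ut Z \<alpha> = (\<integral>w. Y0 w \<partial>M) + (\<integral>w. ?D w * ?dA w \<partial>M)"
  proof -
    have "welfare M Y0 Y1 nut X Ut Z \<alpha> = (\<integral>w. Y0 w + ?D w * ?dA w \<partial>M)"
      unfolding welfare_def outcome_def pot_treat_def
      by (intro Bochner_Integration.integral_cong) (auto simp: algebra_simps)
    also have "\<dots> = (\<integral>w. Y0 w \<partial>M) + (\<integral>w. ?D w * ?dA w \<partial>M)"
      by (rule Bochner_Integration.integral_add[OF int_Y0 intDA])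
    finally show ?thesis .
  qed
  have EY: "(\<integral>w. outcome Y0 Y1 w (pot_treat nut X Ut w (Z w)) \<partial>M) = (\<integral>w. Y0 w \<partial>M) + (\<integral>w. ?D w * ?dZ w \<partial>M)"
  proof -
    have "(\<integral>w. outcome Y0 Y1 w (pot_treat nut X Ut w (Z w)) \<partial>M) = (\<integral>w. Y0 w + ?D w * ?dZ w \<partial>M)"
      unfolding outcome_def pot_treat_def
      by (intro Bochner_Integration.integral_cong) (auto simp: algebra_simps)
    also have "\<dots> = (\<integral>w. Y0 w \<partial>M) + (\<integral>w. ?D w * ?dZ w \<partial>M)"
      by (rule Bochner_Integration.integral_add[OF int_Y0 intDZ])
    finally show ?thesis .
  qed
  have XZm[measurable]: "(\<lambda>w. (X w, Z w)) \<in> measurable M (borel \<Otimes>\<^sub>M borel)" by measurable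
  have TA: "(\<integral>w. ?D w * ?dA w \<partial>M) = (\<integral>w. ?IA (X w, Z w) \<partial>M)"
  proof -
    have "(\<integral>w. ?D w * ?dA w \<partial>M) = (\<integral>y. ?KA y \<partial>(PXZ \<Otimes>\<^sub>M U01))" using kA(2) by simp
    also have "\<dots> = (\<integral>p. ?IA p \<partial>PXZ)" by (rule PU.integral_fst'[OF kA(1), symmetric])
    also have "\<dots> = (\<integral>w. ?IA (X w, Z w) \<partial>M)" unfolding PXZ_def by (rule integral_distr) measurable
    finally show ?thesis .
  qed
  have TZ: "(\<integral>w. ?D w * ?dZ w \<partial>M) = (\<integral>w. ?IZ (X w, Z w) \<partial>M)"
  proof -
    have "(\<integral>w. ?D w * ?dZ w \<partial>M) = (\<integral>y. ?KZ y \<partial>(PXZ \<Otimes>\<^sub>M U01))" using kZ(2) by simp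
    also have "\<dots> = (\<integral>p. ?IZ p \<partial>PXZ)" by (rule PU.integral_fst'[OF kZ(1), symmetric])
    also have "\<dots> = (\<integral>w. ?IZ (X w, Z w) \<partial>M)" unfolding PXZ_def by (rule integral_distr) measurable
    finally show ?thesis .
  qed
  have iIA: "integrable M (\<lambda>w. ?IA (X w, Z w))"
  proof -
    have "integrable PXZ ?IA" by (rule PU.integrable_fst'[OF kA(1)])
    then show ?thesis unfolding PXZ_def by (subst (asm) integrable_distr_eq) measurable
  qed
  have iIZ: "integrable M (\<lambda>w. ?IZ (X w, Z w))"
  proof -
    have "integrable PXZ ?IZ" by (rule PU.integrable_fst'[OF kZ(1)])
    then show ?thesis unfolding PXZ_def by (subst (asm) integrable_distr_eq) measurable
  qed
  have aeA: "AE w in M. integrable U01 (\<lambda>v. ?KA ((X w, Z w), v))"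
    using AE_distrD[OF XZm PU.AE_integrable_fst'[OF kA(1), unfolded PXZ_def]] by simp
  have aeZ: "AE w in M. integrable U01 (\<lambda>v. ?KZ ((X w, Z w), v))"
    using AE_distrD[OF XZm PU.AE_integrable_fst'[OF kZ(1), unfolded PXZ_def]] by simp
  have inner: "AE w in M. (\<integral>u\<in>{0..1}. mte u (X w) *
               (indicator {u. propensity F nut (X w) (\<alpha> (X w) (Z w)) \<ge> u} u
                - indicator {u. propensity F nut (X w) (Z w) \<ge> u} u) \<partial>lborel)
             = ?IA (X w, Z w) - ?IZ (X w, Z w)"
    using aeA aeZ
  proof eventually_elim
    case (elim w)
    have "(\<integral>u\<in>{0..1}. mte u (X w) *
               (indicator {u. propensity F nut (X w) (\<alpha> (X w) (Z w)) \<ge> u} u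
                - indicator {u. propensity F nut (X w) (Z w) \<ge> u} u) \<partial>lborel)
        = (\<integral>v. ?KA ((X w, Z w), v) - ?KZ ((X w, Z w), v) \<partial>U01)"
      by (rule U01_integral[symmetric, THEN trans])
         (measurable, simp add: propensity_def algebra_simps)
    also have "\<dots> = ?IA (X w, Z w) - ?IZ (X w, Z w)"
      by (rule Bochner_Integration.integral_diff[OF elim])
    finally show ?case .
  qed
  have "(\<integral>w. (\<integral>u\<in>{0..1}. mte u (X w) *
               (indicator {u. propensity F nut (X w) (\<alpha> (X w) (Z w)) \<ge> u} u
                - indicator {u. propensity F nut (X w) (Z w) \<ge> u} u) \<partial>lborel) \<partial>M)
      = (\<integral>w. ?IA (X w, Z w) - ?IZ (X w, Z w) \<partial>M)"
    by (rule integral_cong_AE[OF _ _ inner]) (unfold set_lebesgue_integral_def propensity_def, measurable)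
  also have "\<dots> = (\<integral>w. ?IA (X w, Z w) \<partial>M) - (\<integral>w. ?IZ (X w, Z w) \<partial>M)"
    by (rule Bochner_Integration.integral_diff[OF iIA iIZ])
  finally show ?thesis using W EY TA TZ by simp
qed

end
theorem theorem1:
  fixes M :: "'a measure"
    and Y0 Y1 Ut Z :: "'a \<Rightarrow> real"
    and X :: "'a \<Rightarrow> 'x::euclidean_space"
    and nut :: "'x \<Rightarrow> real \<Rightarrow> real"
    and F :: "'x \<Rightarrow> real \<Rightarrow> real"
    and mte :: "real \<Rightarrow> 'x \<Rightarrow> real"
    and \<alpha> :: "'x \<Rightarrow> real \<Rightarrow> real"
  assumes prob: "prob_space M"
    and meas_Y0: "Y0 \<in> borel_measurable M"
    and meas_Y1: "Y1 \<in> borel_measurable M"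
    and meas_Ut: "Ut \<in> borel_measurable M"
    and meas_Z: "Z \<in> borel_measurable M"
    and meas_X: "X \<in> borel_measurable M"
    and meas_nut: "(\<lambda>(x, z). nut x z) \<in> borel_measurable borel"
    \<comment> \<open>Assumption 1(i): U~ independent of Z conditional on X\<close>
    and A1_i: "\<And>A B. A \<in> sets borel \<Longrightarrow> B \<in> sets borel \<Longrightarrow>
        AE w in M. real_cond_exp M (gen_sigma M X)
                     (\<lambda>w. indicator {w. Ut w \<in> A \<and> Z w \<in> B} w) w
                   = real_cond_exp M (gen_sigma M X) (\<lambda>w. indicator {w. Ut w \<in> A} w) w
                     * real_cond_exp M (gen_sigma M X) (\<lambda>w. indicator {w. Z w \<in> B} w) w"
    \<comment> \<open>Assumption 1(ii): mean independence of Y(d) from Z given (X, U~), and integrability\<close>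
    and A1_ii_Y0: "AE w in M. real_cond_exp M (gen_sigma M (\<lambda>w. (X w, Z w, Ut w))) Y0 w
                             = real_cond_exp M (gen_sigma M (\<lambda>w. (X w, Ut w))) Y0 w"
    and A1_ii_Y1: "AE w in M. real_cond_exp M (gen_sigma M (\<lambda>w. (X w, Z w, Ut w))) Y1 w
                             = real_cond_exp M (gen_sigma M (\<lambda>w. (X w, Ut w))) Y1 w"
    and int_Y0: "integrable M Y0"
    and int_Y1: "integrable M Y1"
    \<comment> \<open>F is (a regular version of) the conditional CDF of U~ given X ...\<close>
    and F_cdf: "\<And>t. AE w in M. F (X w) t
                   = real_cond_exp M (gen_sigma M X) (\<lambda>w. indicator {w. Ut w \<le> t} w) w"
    and F_meas: "\<And>t. (\<lambda>x. F x t) \<in> borel_measurable borel"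
    and F_mono: "\<And>x. mono (F x)"
    and F_bot: "\<And>x. (F x \<longlongrightarrow> 0) at_bot"
    and F_top: "\<And>x. (F x \<longlongrightarrow> 1) at_top"
    \<comment> \<open>... Assumption 1(iii): U~ is continuously distributed conditional on X\<close>
    and A1_iii: "\<And>x. continuous_on UNIV (F x)"
    \<comment> \<open>mte is (a version of) MTE(u,x) = E[Y(1) - Y(0) | U = u, X = x], with U = F(U~ | X)\<close>
    and meas_mte: "(\<lambda>(u, x). mte u x) \<in> borel_measurable borel"
    and mte_def: "AE w in M. mte (F (X w) (Ut w)) (X w)
                   = real_cond_exp M (gen_sigma M (\<lambda>w. (F (X w) (Ut w), X w)))
                       (\<lambda>w. Y1 w - Y0 w) w"
    \<comment> \<open>measurable encouragement rule\<close>
    and meas_\<alpha>: "(\<lambda>(x, z). \<alpha> x z) \<in> borel_measurable borel"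
  shows "welfare M Y0 Y1 nut X Ut Z \<alpha>
       = (\<integral>w. outcome Y0 Y1 w (pot_treat nut X Ut w (Z w)) \<partial>M)
         + (\<integral>w. (\<integral>u\<in>{0..1}. mte u (X w) *
               (indicator {u. propensity F nut (X w) (\<alpha> (X w) (Z w)) \<ge> u} u
                - indicator {u. propensity F nut (X w) (Z w) \<ge> u} u) \<partial>lborel) \<partial>M)"
  proof -
  interpret setting M Y0 Y1 Ut Z X nut F mte
    by (rule setting.intro; fact assms)
  show ?thesis by (rule main[OF meas_nut meas_\<alpha>])
qed

end
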